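(* Let $(P,\le,A_1\ldots A_k)$ be a regular poset of width $w$ with node tree $(\mathcal{N},\prec)$, and let $\mathcal{F}\subseteq\mathcal{N}$ be ancestor-free. Then the edge poset $(\mathcal{F}_E,\le_E)$ has width at most $w^3$.
   Context: Let $(P,\le)$ be a finite poset of width $w$. For $A\subseteq P$ let $A{\uparrow}=\{y: x\le y\text{ for some }x\in A\}$, $A{\downarrow}=\{y: y\le x\text{ for some }x\in A\}$. For maximal antichains $A,B$ write $A\sqsubseteq B$ if $A\subseteq B{\downarrow}$, and $A\sqsubset B$ if also $A\ne B$. For disjoint antichains $A\sqsubset B$, $(A,B,<)$ is the bipartite graph with classes $A,B$ and edges $(a<b)$ for $a\in A,b\in B$, $a<b$; it is regular if every edge lies in a perfect matching. A regular poset $(P,\le,A_1\ldots A_k)$: $A_1,\dots,A_k$ are maximum antichains partitioning $P$, $(\{A_1,\dots,A_k\},\sqsubseteq)$ is a linear order with minimum $A_1$ and maximum $A_2$, $a<b$ for all $a\in A_1,b\in A_2$, and for every $t\in[2,k]$ and every $A_p\sqsubset A_s$ consecutive in $(\{A_1,\dots,A_t\},\sqsubseteq)$ the graph $(A_p,A_s,<)$ is regular. A node is a bipartite graph $(X,Y,<)$ where, for some such consecutive pair $A_p\sqsubset A_s$ (at some stage $t$), $X\subseteq A_p$, $Y\subseteq A_s$ and $X\cup Y$ is the vertex set of a connected component of $(A_p,A_s,<)$; $\mathrm{Int}(X,Y,<)=X{\uparrow}\cap Y{\downarrow}$. Node tree $(\mathcal{N},\prec)$: $\mathcal{N}$ is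 the set of all nodes; when for $t\ge3$ the antichain $A_t$ is inserted between $A_p\sqsubset A_s$ consecutive at stage $t-1$, each node $M$ of $(A_p,A_t,<)$ or $(A_t,A_s,<)$ is a child of the unique node $N$ of $(A_p,A_s,<)$ with $\mathrm{Int}(M)\subset\mathrm{Int}(N)$; this is a rooted tree with root $(A_1,A_2,<)$. A set $\mathcal{F}\subseteq\mathcal{N}$ is ancestor-free if no node of $\mathcal{F}$ is a descendant of another node of $\mathcal{F}$. For $\mathcal{F}\subseteq\mathcal{N}$, $\mathcal{F}_E$ is the set of all edges $(a<b)$ of nodes in $\mathcal{F}$, and the edge poset $(\mathcal{F}_E,\le_E)$ is the partial order in which for distinct edges $(a<b)<_E(c<d)$ iff $b\le c$. *)

theory Defs
  imports Main
begin

definition less_of :: "('a \<Rightarrow> 'a \<Rightarrow> bool) \<Rightarrow> 'a \<Rightarrow> 'a \<Rightarrow> bool" where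
  "less_of le x y \<longleftrightarrow> le x y \<and> x \<noteq> y"

definition finite_poset :: "'a set \<Rightarrow> ('a \<Rightarrow> 'a \<Rightarrow> bool) \<Rightarrow> bool" where
  "finite_poset P le \<longleftrightarrow> finite P \<and> (\<forall>x\<in>P. le x x)
     \<and> (\<forall>x\<in>P. \<forall>y\<in>P. le x y \<and> le y x \<longrightarrow> x = y)
     \<and> (\<forall>x\<in>P. \<forall>y\<in>P. \<forall>z\<in>P. le x y \<and> le y z \<longrightarrow> le x z)"

definition antichain_on :: "'b set \<Rightarrow> ('b \<Rightarrow> 'b \<Rightarrow> bool) \<Rightarrow> 'b set \<Rightarrow> bool" where
  "antichain_on S le C \<longleftrightarrow> C \<subseteq> S \<and> (\<forall>x\<in>C. \<forall>y\<in>C. le x y \<longrightarrow> x = y)"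

definition width :: "'b set \<Rightarrow> ('b \<Rightarrow> 'b \<Rightarrow> bool) \<Rightarrow> nat" where
  "width S le = Max {card C | C. antichain_on S le C}"

definition maximum_antichain :: "'a set \<Rightarrow> ('a \<Rightarrow> 'a \<Rightarrow> bool) \<Rightarrow> 'a set \<Rightarrow> bool" where
  "maximum_antichain P le C \<longleftrightarrow> antichain_on P le C \<and> card C = width P le"

definition up_set :: "'a set \<Rightarrow> ('a \<Rightarrow> 'a \<Rightarrow> bool) \<Rightarrow> 'a set \<Rightarrow> 'a set" where
  "up_set P le S = {y\<in>P. \<exists>x\<in>S. le x y}"

definition down_set :: "'a set \<Rightarrow> ('a \<Rightarrow> 'a \<Rightarrow> bool) \<Rightarrow> 'a set \<Rightarrow> 'a set" where
  "down_set P le S = {y\<in>P. \<exists>x\<in>S. le y x}"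

definition sqle :: "'a set \<Rightarrow> ('a \<Rightarrow> 'a \<Rightarrow> bool) \<Rightarrow> 'a set \<Rightarrow> 'a set \<Rightarrow> bool" where
  "sqle P le A B \<longleftrightarrow> A \<subseteq> down_set P le B"

definition sqlt :: "'a set \<Rightarrow> ('a \<Rightarrow> 'a \<Rightarrow> bool) \<Rightarrow> 'a set \<Rightarrow> 'a set \<Rightarrow> bool" where
  "sqlt P le A B \<longleftrightarrow> sqle P le A B \<and> A \<noteq> B"

definition bip_regular :: "('a \<Rightarrow> 'a \<Rightarrow> bool) \<Rightarrow> 'a set \<Rightarrow> 'a set \<Rightarrow> bool" where
  "bip_regular le X Y \<longleftrightarrow> (\<forall>a\<in>X. \<forall>b\<in>Y. less_of le a b \<longrightarrow>
     (\<exists>f. bij_betw f X Y \<and> (\<forall>x\<in>X. less_of le x (f x)) \<and> f a = b))"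

definition consec :: "'a set \<Rightarrow> ('a \<Rightarrow> 'a \<Rightarrow> bool) \<Rightarrow> (nat \<Rightarrow> 'a set) \<Rightarrow> nat \<Rightarrow> nat \<Rightarrow> nat \<Rightarrow> bool" where
  "consec P le A t p s \<longleftrightarrow> p \<in> {1..t} \<and> s \<in> {1..t} \<and> sqlt P le (A p) (A s)
     \<and> \<not> (\<exists>q\<in>{1..t}. sqlt P le (A p) (A q) \<and> sqlt P le (A q) (A s))"

definition regular_poset :: "'a set \<Rightarrow> ('a \<Rightarrow> 'a \<Rightarrow> bool) \<Rightarrow> (nat \<Rightarrow> 'a set) \<Rightarrow> nat \<Rightarrow> bool" where
  "regular_poset P le A k \<longleftrightarrow>
     finite_poset P le \<and> 2 \<le> k
     \<and> (\<forall>i\<in>{1..k}. maximum_antichain P le (A i))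
     \<and> (\<forall>i\<in>{1..k}. A i \<noteq> {})
     \<and> (\<forall>i\<in>{1..k}. \<forall>j\<in>{1..k}. i \<noteq> j \<longrightarrow> A i \<inter> A j = {})
     \<and> (\<Union>i\<in>{1..k}. A i) = P
     \<and> (\<forall>i\<in>{1..k}. sqle P le (A i) (A i))
     \<and> (\<forall>i\<in>{1..k}. \<forall>j\<in>{1..k}. sqle P le (A i) (A j) \<and> sqle P le (A j) (A i) \<longrightarrow> A i = A j)
     \<and> (\<forall>i\<in>{1..k}. \<forall>j\<in>{1..k}. \<forall>l\<in>{1..k}.
           sqle P le (A i) (A j) \<and> sqle P le (A j) (A l) \<longrightarrow> sqle P le (A i) (A l))
     \<and> (\<forall>i\<in>{1..k}. \<forall>j\<in>{1..k}. sqle P le (A i) (A j) \<or> sqle P le (A j) (A i))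
     \<and> (\<forall>i\<in>{1..k}. sqle P le (A 1) (A i) \<and> sqle P le (A i) (A 2))
     \<and> (\<forall>a\<in>A 1. \<forall>b\<in>A 2. less_of le a b)
     \<and> (\<forall>t\<in>{2..k}. \<forall>p s. consec P le A t p s \<longrightarrow> bip_regular le (A p) (A s))"

text \<open>Adjacency in the bipartite graph (X,Y,<); a node is given by the pair (X',Y') of the
  two sides of a connected component.\<close>
definition bip_adj :: "('a \<Rightarrow> 'a \<Rightarrow> bool) \<Rightarrow> 'a set \<Rightarrow> 'a set \<Rightarrow> 'a \<Rightarrow> 'a \<Rightarrow> bool" where
  "bip_adj le X Y u v \<longleftrightarrow> (u \<in> X \<and> v \<in> Y \<and> less_of le u v) \<or> (v \<in> X \<and> u \<in> Y \<and> less_of le v u)"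

definition is_component :: "('a \<Rightarrow> 'a \<Rightarrow> bool) \<Rightarrow> 'a set \<Rightarrow> 'a set \<Rightarrow> 'a set \<times> 'a set \<Rightarrow> bool" where
  "is_component le X Y N \<longleftrightarrow> (\<exists>v\<in>X \<union> Y.
     fst N = {u. (bip_adj le X Y)\<^sup>*\<^sup>* v u} \<inter> X \<and> snd N = {u. (bip_adj le X Y)\<^sup>*\<^sup>* v u} \<inter> Y)"

definition nodes :: "'a set \<Rightarrow> ('a \<Rightarrow> 'a \<Rightarrow> bool) \<Rightarrow> (nat \<Rightarrow> 'a set) \<Rightarrow> nat \<Rightarrow> ('a set \<times> 'a set) set" where
  "nodes P le A k = {N. \<exists>t\<in>{2..k}. \<exists>p s. consec P le A t p s \<and> is_component le (A p) (A s) N}"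

definition node_int :: "'a set \<Rightarrow> ('a \<Rightarrow> 'a \<Rightarrow> bool) \<Rightarrow> 'a set \<times> 'a set \<Rightarrow> 'a set" where
  "node_int P le N = up_set P le (fst N) \<inter> down_set P le (snd N)"

definition node_child :: "'a set \<Rightarrow> ('a \<Rightarrow> 'a \<Rightarrow> bool) \<Rightarrow> (nat \<Rightarrow> 'a set) \<Rightarrow> nat
    \<Rightarrow> 'a set \<times> 'a set \<Rightarrow> 'a set \<times> 'a set \<Rightarrow> bool" where
  "node_child P le A k M N \<longleftrightarrow> (\<exists>t\<in>{3..k}. \<exists>p s.
     consec P le A (t - 1) p s \<and> sqlt P le (A p) (A t) \<and> sqlt P le (A t) (A s)
     \<and> (is_component le (A p) (A t) M \<or> is_component le (A t) (A s) M)
     \<and> is_component le (A p) (A s) N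
     \<and> node_int P le M \<subset> node_int P le N)"

definition ancestor_free :: "'a set \<Rightarrow> ('a \<Rightarrow> 'a \<Rightarrow> bool) \<Rightarrow> (nat \<Rightarrow> 'a set) \<Rightarrow> nat
    \<Rightarrow> ('a set \<times> 'a set) set \<Rightarrow> bool" where
  "ancestor_free P le A k F \<longleftrightarrow> F \<subseteq> nodes P le A k
     \<and> (\<forall>M\<in>F. \<forall>N\<in>F. M \<noteq> N \<longrightarrow> \<not> (node_child P le A k)\<^sup>+\<^sup>+ M N)"

definition edge_set :: "('a \<Rightarrow> 'a \<Rightarrow> bool) \<Rightarrow> ('a set \<times> 'a set) set \<Rightarrow> ('a \<times> 'a) set" where
  "edge_set le F = {(a, b). \<exists>N\<in>F. a \<in> fst N \<and> b \<in> snd N \<and> less_of le a b}"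

definition edge_le :: "('a \<Rightarrow> 'a \<Rightarrow> bool) \<Rightarrow> 'a \<times> 'a \<Rightarrow> 'a \<times> 'a \<Rightarrow> bool" where
  "edge_le le e e' \<longleftrightarrow> e = e' \<or> le (snd e) (fst e')"

end

theory Submission
  imports Defs
begin

locale RP =
  fixes P :: "'a set" and le :: "'a \<Rightarrow> 'a \<Rightarrow> bool" and A :: "nat \<Rightarrow> 'a set" and k :: nat
  assumes reg: "regular_poset P le A k"
begin

abbreviation "I \<equiv> {1..k}"
abbreviation "w \<equiv> width P le"
abbreviation "sq i j \<equiv> sqle P le (A i) (A j)"
abbreviation "sqs i j \<equiv> sqlt P le (A i) (A j)"

lemmas R = reg[unfolded regular_poset_def]
lemmas po = R[THEN conjunct1]
lemmas po_r = R[THEN conjunct2]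
lemmas k2 = po_r[THEN conjunct1]
lemmas k2_r = po_r[THEN conjunct2]
lemmas maxa = k2_r[THEN conjunct1]
lemmas maxa_r = k2_r[THEN conjunct2]
lemmas Ane0 = maxa_r[THEN conjunct1]
lemmas Ane0_r = maxa_r[THEN conjunct2]
lemmas Adisj0 = Ane0_r[THEN conjunct1]
lemmas Adisj0_r = Ane0_r[THEN conjunct2]
lemmas Aun = Adisj0_r[THEN conjunct1]
lemmas Aun_r = Adisj0_r[THEN conjunct2]
lemmas srefl0 = Aun_r[THEN conjunct1]
lemmas srefl0_r = Aun_r[THEN conjunct2]
lemmas santi0 = srefl0_r[THEN conjunct1]
lemmas santi0_r = srefl0_r[THEN conjunct2]
lemmas strans0 = santi0_r[THEN conjunct1]
lemmas strans0_r = santi0_r[THEN conjunct2]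
lemmas slin0 = strans0_r[THEN conjunct1]
lemmas slin0_r = strans0_r[THEN conjunct2]
lemmas sbt0 = slin0_r[THEN conjunct1]
lemmas sbt0_r = slin0_r[THEN conjunct2]
lemmas A120 = sbt0_r[THEN conjunct1]
lemmas A120_r = sbt0_r[THEN conjunct2]
lemmas reg0 = A120_r

lemma fin: "finite P" using po unfolding finite_poset_def by blast
lemma refl: assumes "x \<in> P" shows "le x x" using po assms unfolding finite_poset_def by blast
lemma antisym: "x\<in>P \<Longrightarrow> y\<in>P \<Longrightarrow> le x y \<Longrightarrow> le y x \<Longrightarrow> x = y"
  using po unfolding finite_poset_def by blast
lemma trans: "x\<in>P \<Longrightarrow> y\<in>P \<Longrightarrow> z\<in>P \<Longrightarrow> le x y \<Longrightarrow> le y z \<Longrightarrow> le x z"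
  using po unfolding finite_poset_def by blast
lemma AP: "i \<in> I \<Longrightarrow> A i \<subseteq> P"
  using maxa unfolding maximum_antichain_def antichain_on_def by blast
lemma Aanti: "i\<in>I \<Longrightarrow> x\<in>A i \<Longrightarrow> y \<in> A i \<Longrightarrow> le x y \<Longrightarrow> x = y"
  using maxa unfolding maximum_antichain_def antichain_on_def by blast
lemma Acard: "i\<in>I \<Longrightarrow> card (A i) = w"
  using maxa unfolding maximum_antichain_def by blast
lemma Ane: "i\<in>I \<Longrightarrow> A i \<noteq> {}"
  using Ane0 by blast
lemma Adisj: "i\<in>I \<Longrightarrow> j\<in>I \<Longrightarrow> i \<noteq> j \<Longrightarrow> A i \<inter> A j = {}"
  using Adisj0 by blast
lemma sq_refl: "i\<in>I \<Longrightarrow> sq i i"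
  using srefl0 by blast
lemma sq_antisym: "i\<in>I \<Longrightarrow> j\<in>I \<Longrightarrow> sq i j \<Longrightarrow> sq j i \<Longrightarrow> A i = A j"
  using santi0 by blast
lemma sq_trans: "i\<in>I \<Longrightarrow> j\<in>I \<Longrightarrow> l\<in>I \<Longrightarrow> sq i j \<Longrightarrow> sq j l \<Longrightarrow> sq i l"
  using strans0 by blast
lemma sq_lin: "i\<in>I \<Longrightarrow> j\<in>I \<Longrightarrow> sq i j \<or> sq j i"
  using slin0 by blast
lemma sq_bot: "i\<in>I \<Longrightarrow> sq 1 i"
  using sbt0 by blast
lemma sq_top: "i\<in>I \<Longrightarrow> sq i 2"
  using sbt0 by blast
lemma A12: "a\<in>A 1 \<Longrightarrow> b\<in>A 2 \<Longrightarrow> less_of le a b"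
  using A120 by blast
lemma regular: "t\<in>{2..k} \<Longrightarrow> consec P le A t p s \<Longrightarrow> bip_regular le (A p) (A s)"
  using reg0 by blast

lemma Aeq: "i\<in>I \<Longrightarrow> j\<in>I \<Longrightarrow> A i = A j \<Longrightarrow> i = j"
proof (rule ccontr)
  assume *: "i\<in>I" "j\<in>I" "A i = A j" "i \<noteq> j"
  have "A i \<inter> A j = {}" using Adisj[OF *(1,2,4)] .
  thus False using * Ane[of i] by simp
qed

lemma sqs_iff: "sqs i j \<longleftrightarrow> sq i j \<and> A i \<noteq> A j" unfolding sqlt_def by simp

lemma sq_cases: "i\<in>I \<Longrightarrow> j\<in>I \<Longrightarrow> sqs i j \<or> i = j \<or> sqs j i"
  using sq_lin[of i j] Aeq[of i j] unfolding sqlt_def by auto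

lemma sqs_trans: assumes "i\<in>I" "j\<in>I" "l\<in>I" "sqs i j" "sqs j l" shows "sqs i l"
proof -
  have a: "sq i j" "sq j l" "A i \<noteq> A j" using assms unfolding sqlt_def by auto
  have b: "sq i l" using sq_trans[OF assms(1-3) a(1,2)] .
  have "A i \<noteq> A l"
  proof
    assume "A i = A l"
    hence "sq j i" using a(2) by simp
    hence "A i = A j" using sq_antisym[OF assms(1,2) a(1)] by simp
    thus False using a(3) by simp
  qed
  thus ?thesis using b unfolding sqlt_def by simp
qed

lemma sqs_sq_trans: assumes "i\<in>I" "j\<in>I" "l\<in>I" "sqs i j" "sq j l" shows "sqs i l"
proof -
  have a: "sq i j" "A i \<noteq> A j" using assms unfolding sqlt_def by auto
  have b: "sq i l" using sq_trans[OF assms(1-3) a(1) assms(5)] .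
  have "A i \<noteq> A l"
  proof
    assume "A i = A l"
    hence "sq j i" using assms(5) by simp
    hence "A i = A j" using sq_antisym[OF assms(1,2) a(1)] by simp
    thus False using a(2) by simp
  qed
  thus ?thesis using b unfolding sqlt_def by simp
qed

lemma sq_sqs_trans: assumes "i\<in>I" "j\<in>I" "l\<in>I" "sq i j" "sqs j l" shows "sqs i l"
proof -
  have a: "sq j l" "A j \<noteq> A l" using assms unfolding sqlt_def by auto
  have b: "sq i l" using sq_trans[OF assms(1-3) assms(4) a(1)] .
  have "A i \<noteq> A l"
  proof
    assume "A i = A l"
    hence "sq l j" using assms(4) by simp
    hence "A j = A l" using sq_antisym[OF assms(2,3) a(1)] by simp
    thus False using a(2) by simp
  qed
  thus ?thesis using b unfolding sqlt_def by simp
qed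

lemma not_sq: "i\<in>I \<Longrightarrow> j\<in>I \<Longrightarrow> \<not> sq i j \<Longrightarrow> sqs j i"
  using sq_lin[of i j] unfolding sqlt_def by auto

lemma sqs_not_sq: "i\<in>I \<Longrightarrow> j\<in>I \<Longrightarrow> sqs i j \<Longrightarrow> \<not> sq j i"
  using sq_antisym[of i j] unfolding sqlt_def by auto

lemma width_ub: "antichain_on P le C \<Longrightarrow> card C \<le> w"
proof -
  assume a: "antichain_on P le C"
  have "{card C | C. antichain_on P le C} \<subseteq> {0..card P}"
    using fin by (auto simp: antichain_on_def card_mono)
  hence f: "finite {card C | C. antichain_on P le C}" using finite_subset by blast
  have "card C \<in> {card C | C. antichain_on P le C}" using a by blast
  hence "card C \<le> Max {card C | C. antichain_on P le C}" using Max_ge[OF f] by blast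
  thus ?thesis unfolding width_def .
qed

lemma sq_down: "sq i j \<Longrightarrow> x \<in> A i \<Longrightarrow> \<exists>y\<in>A j. le x y"
  unfolding sqle_def down_set_def by blast

lemma idx_ex: "p \<in> P \<Longrightarrow> \<exists>i\<in>I. p \<in> A i" using Aun by blast

definition idx where "idx p = (SOME i. i \<in> I \<and> p \<in> A i)"

lemma idx: "p \<in> P \<Longrightarrow> idx p \<in> I \<and> p \<in> A (idx p)"
  unfolding idx_def using idx_ex by (metis (mono_tags, lifting) someI_ex)

lemma idx_eq: "i \<in> I \<Longrightarrow> p \<in> A i \<Longrightarrow> idx p = i"
  using idx[of p] AP Adisj by blast

lemma le_sq: "i\<in>I \<Longrightarrow> j\<in>I \<Longrightarrow> p \<in> A i \<Longrightarrow> q \<in> A j \<Longrightarrow> le p q \<Longrightarrow> sq i j"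
proof (rule ccontr)
  assume *: "i\<in>I" "j\<in>I" "p \<in> A i" "q \<in> A j" "le p q" "\<not> sq i j"
  hence s: "sqs j i" using not_sq by blast
  then obtain q' where q': "q' \<in> A i" "le q q'" using sq_down * unfolding sqlt_def by blast
  have "p \<in> P" "q \<in> P" "q' \<in> P" using * q' AP by blast+
  hence "le p q'" using trans * q' by blast
  hence "p = q'" using Aanti * q' by blast
  hence "p = q" using antisym \<open>p\<in>P\<close> \<open>q\<in>P\<close> * q' by blast
  thus False using s * Adisj unfolding sqlt_def by blast
qed

lemma le_same: "i\<in>I \<Longrightarrow> p \<in> A i \<Longrightarrow> q \<in> A i \<Longrightarrow> le p q \<Longrightarrow> p = q"
  using Aanti by blast

lemma less_sqs: assumes "i\<in>I" "j\<in>I" "p \<in> A i" "q \<in> A j" "less_of le p q" shows "sqs i j"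
proof -
  have "sq i j" using le_sq assms unfolding less_of_def by blast
  moreover have "i \<noteq> j" using Aanti assms unfolding less_of_def by blast
  hence "A i \<noteq> A j" using Aeq assms by blast
  ultimately show ?thesis unfolding sqlt_def by simp
qed

lemma sqs_less: assumes "i\<in>I" "j\<in>I" "sqs i j" "x \<in> A i" shows "\<exists>y\<in>A j. less_of le x y"
proof -
  obtain y where y: "y \<in> A j" "le x y" using sq_down assms unfolding sqlt_def by blast
  have "i \<noteq> j" using assms unfolding sqlt_def by blast
  hence "x \<noteq> y" using Adisj assms y by blast
  thus ?thesis using y unfolding less_of_def by blast
qed

lemma sqs_up: "i\<in>I \<Longrightarrow> j\<in>I \<Longrightarrow> sqs i j \<Longrightarrow> y \<in> A j \<Longrightarrow> \<exists>x\<in>A i. less_of le x y"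
proof (rule ccontr)
  assume *: "i\<in>I" "j\<in>I" "sqs i j" "y \<in> A j" "\<not> (\<exists>x\<in>A i. less_of le x y)"
  have ij: "i \<noteq> j" using * unfolding sqlt_def by blast
  have yP: "y \<in> P" using * AP by blast
  have "y \<notin> A i" using * ij Adisj by blast
  show False
  proof (cases "\<exists>x\<in>A i. le y x")
    case True
    then obtain x where x: "x \<in> A i" "le y x" by blast
    then obtain y' where y': "y' \<in> A j" "le x y'" using sq_down * unfolding sqlt_def by blast
    have "x \<in> P" "y' \<in> P" using x y' * AP by blast+
    hence "le y y'" using trans yP x y' by blast
    hence "y = y'" using Aanti * y' by blast
    hence "x = y" using antisym x y' yP \<open>x\<in>P\<close> by blast
    thus False using x \<open>y \<notin> A i\<close> by blast
  next
    case False
    have nl: "\<forall>x\<in>A i. \<not> le x y"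
    proof
      fix x assume "x \<in> A i"
      hence "x \<noteq> y" using \<open>y \<notin> A i\<close> by blast
      thus "\<not> le x y" using * \<open>x\<in>A i\<close> unfolding less_of_def by blast
    qed
    have "antichain_on P le (insert y (A i))"
      using False nl yP AP[of i] * Aanti[of i] unfolding antichain_on_def by blast
    hence "card (insert y (A i)) \<le> w" by (rule width_ub)
    moreover have "finite (A i)" using fin AP * finite_subset by blast
    ultimately have "card (A i) + 1 \<le> w" using \<open>y \<notin> A i\<close> by simp
    thus False using Acard * by simp
  qed
qed


lemma ex_max_nat: "finite S \<Longrightarrow> S \<noteq> {} \<Longrightarrow> \<exists>x\<in>S. \<forall>y\<in>S. (f y::nat) \<le> f x"
proof -
  assume a: "finite S" "S \<noteq> {}"
  have "Max (f ` S) \<in> f ` S" using a by simp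
  then obtain x where x: "x \<in> S" "f x = Max (f ` S)" by auto
  have "\<forall>y\<in>S. f y \<le> f x" using x a by simp
  thus ?thesis using x by blast
qed

lemma ex_min_nat: "finite S \<Longrightarrow> S \<noteq> {} \<Longrightarrow> \<exists>x\<in>S. \<forall>y\<in>S. (f x::nat) \<le> f y"
proof -
  assume a: "finite S" "S \<noteq> {}"
  have "Min (f ` S) \<in> f ` S" using a by simp
  then obtain x where x: "x \<in> S" "f x = Min (f ` S)" by auto
  have "\<forall>y\<in>S. f x \<le> f y" using x a by simp
  thus ?thesis using x by blast
qed

definition r where "r i = card {j\<in>I. sqs j i}"

lemma r_mono: assumes "i\<in>I" "j\<in>I" "sqs i j" shows "r i < r j"
proof -
  have "{l\<in>I. sqs l i} \<subseteq> {l\<in>I. sqs l j}" using sqs_trans assms by blast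
  moreover have "i \<in> {l\<in>I. sqs l j}" using assms by blast
  moreover have "i \<notin> {l\<in>I. sqs l i}" unfolding sqlt_def by blast
  ultimately have "{l\<in>I. sqs l i} \<subset> {l\<in>I. sqs l j}" by blast
  thus ?thesis unfolding r_def by (intro psubset_card_mono) auto
qed

lemma r_sq: "i\<in>I \<Longrightarrow> j\<in>I \<Longrightarrow> r i \<le> r j \<Longrightarrow> sq i j"
  using not_sq r_mono by fastforce

lemma pred_ex: assumes "i \<in> I" "i \<noteq> 1" shows "\<exists>j\<in>I. consec P le A k j i"
proof -
  let ?S = "{j\<in>I. sqs j i}"
  have "1 \<in> I" using k2 by simp
  hence "A 1 \<noteq> A i" using Aeq assms by blast
  hence "1 \<in> ?S" using sq_bot[OF assms(1)] \<open>1\<in>I\<close> unfolding sqlt_def by blast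
  hence "?S \<noteq> {}" by blast
  then obtain j where j: "j \<in> ?S" "\<forall>j'\<in>?S. r j' \<le> r j" using ex_max_nat[of ?S r] by auto
  have "\<not> (\<exists>q\<in>I. sqs j q \<and> sqs q i)"
  proof
    assume "\<exists>q\<in>I. sqs j q \<and> sqs q i"
    then obtain q where q: "q\<in>I" "sqs j q" "sqs q i" by blast
    hence "r j < r q" using r_mono j by blast
    moreover have "q \<in> ?S" using q by blast
    ultimately show False using j by force
  qed
  thus ?thesis using j assms unfolding consec_def by blast
qed

lemma succ_uniq: assumes "consec P le A k j s" "consec P le A k j s'" shows "s = s'"
proof -
  have I: "j \<in> I" "s \<in> I" "s' \<in> I" "sqs j s" "sqs j s'" using assms unfolding consec_def by auto
  have n1: "\<not> sqs s s'" using assms(2) I unfolding consec_def by blast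
  have n2: "\<not> sqs s' s" using assms(1) I unfolding consec_def by blast
  show ?thesis using sq_cases[of s s'] I n1 n2 by blast
qed

definition succ where "succ j = (SOME s. consec P le A k j s)"
definition mt where "mt j = (SOME f. bij_betw f (A j) (A (succ j)) \<and> (\<forall>x\<in>A j. less_of le x (f x)))"
definition sig where "sig p = (if (\<exists>s. consec P le A k (idx p) s) then mt (idx p) p else p)"

lemma mt_prop: assumes "consec P le A k j s"
  shows "succ j = s \<and> bij_betw (mt j) (A j) (A s) \<and> (\<forall>x\<in>A j. less_of le x (mt j x))"
proof -
  have "consec P le A k j (succ j)" unfolding succ_def using assms by (rule someI)
  hence ss: "succ j = s" using succ_uniq assms by blast
  have I: "j \<in> I" "s \<in> I" "sqs j s" using assms unfolding consec_def by auto
  have "k \<in> {2..k}" using k2 by simp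
  hence br: "bip_regular le (A j) (A s)" using regular assms by blast
  obtain x where x: "x \<in> A j" using Ane I by blast
  then obtain y where y: "y \<in> A s" "less_of le x y" using sqs_less I by blast
  have "\<exists>f. bij_betw f (A j) (A s) \<and> (\<forall>x\<in>A j. less_of le x (f x))"
    using br x y unfolding bip_regular_def by blast
  hence "bij_betw (mt j) (A j) (A s) \<and> (\<forall>x\<in>A j. less_of le x (mt j x))"
    unfolding mt_def ss by (rule someI_ex)
  thus ?thesis using ss by blast
qed

lemma sig: assumes "p \<in> P" shows "sig p \<in> P \<and> le p (sig p)"
proof (cases "\<exists>s. consec P le A k (idx p) s")
  case True
  then obtain s where s: "consec P le A k (idx p) s" by blast
  have "s \<in> I" using s unfolding consec_def by auto
  have m: "bij_betw (mt (idx p)) (A (idx p)) (A s)" "\<forall>x\<in>A (idx p). less_of le x (mt (idx p) x)"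
    using mt_prop[OF s] by auto
  have pi: "p \<in> A (idx p)" using idx assms by blast
  have "sig p = mt (idx p) p" unfolding sig_def using True by simp
  moreover have "mt (idx p) p \<in> A s" using m(1) pi unfolding bij_betw_def by blast
  hence "mt (idx p) p \<in> P" using AP[OF \<open>s\<in>I\<close>] by blast
  moreover have "less_of le p (mt (idx p) p)" using m(2) pi by blast
  ultimately show ?thesis unfolding less_of_def by simp
next
  case False
  hence "sig p = p" unfolding sig_def by auto
  thus ?thesis using assms refl by simp
qed

lemma pow_P: "b \<in> P \<Longrightarrow> (sig^^n) b \<in> P"
  by (induct n) (auto simp: sig)

lemma pow_mono: assumes "b \<in> P" "n \<le> m" shows "le ((sig^^n) b) ((sig^^m) b)"
  using assms(2)
proof (induct m)
  case 0
  thus ?case using assms refl by simp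
next
  case (Suc m)
  show ?case
  proof (cases "n = Suc m")
    case True thus ?thesis using refl pow_P assms by blast
  next
    case False
    hence "le ((sig^^n) b) ((sig^^m) b)" using Suc by simp
    moreover have "le ((sig^^m) b) ((sig^^(Suc m)) b)" using sig pow_P assms by simp
    ultimately show ?thesis using trans pow_P assms by blast
  qed
qed

lemma reach: "p \<in> P \<Longrightarrow> \<exists>b\<in>A 1. \<exists>n. (sig^^n) b = p"
proof (induct "r (idx p)" arbitrary: p rule: less_induct)
  case less
  have pi: "idx p \<in> I" "p \<in> A (idx p)" using idx less by auto
  show ?case
  proof (cases "idx p = 1")
    case True
    hence "(sig^^0) p = p" "p \<in> A 1" using pi by auto
    thus ?thesis by blast
  next
    case False
    then obtain j where j: "j \<in> I" "consec P le A k j (idx p)" using pred_ex pi by blast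
    have m: "bij_betw (mt j) (A j) (A (idx p))" using mt_prop[OF j(2)] by blast
    hence "mt j ` A j = A (idx p)" by (rule bij_betw_imp_surj_on)
    hence "p \<in> mt j ` A j" using pi by simp
    then obtain q where q: "q \<in> A j" "mt j q = p" by (rule imageE) (rule that, auto)
    have qi: "idx q = j" using idx_eq j q by blast
    have "sig q = p" unfolding sig_def qi using q j by auto
    have "r j < r (idx p)" using r_mono j pi unfolding consec_def by blast
    hence "r (idx q) < r (idx p)" using qi by simp
    moreover have "q \<in> P" using q j AP by blast
    ultimately obtain b n where b: "b \<in> A 1" "(sig^^n) b = q" using less by blast
    hence "(sig^^(Suc n)) b = p" using \<open>sig q = p\<close> by simp
    thus ?thesis using b by blast
  qed
qed

definition chi where "chi p = (SOME b. b\<in>A 1 \<and> (\<exists>n. (sig^^n) b = p))"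

lemma chi: assumes "p \<in> P" shows "chi p \<in> A 1 \<and> (\<exists>n. (sig^^n) (chi p) = p)"
proof -
  have "\<exists>b. b\<in>A 1 \<and> (\<exists>n. (sig^^n) b = p)" using reach[OF assms] by blast
  thus ?thesis unfolding chi_def by (rule someI_ex)
qed

lemma chi_comp: assumes "p \<in> P" "q \<in> P" "chi p = chi q" shows "le p q \<or> le q p"
proof -
  obtain n m where "(sig^^n) (chi p) = p" "(sig^^m) (chi p) = q" using chi assms by metis
  moreover have "chi p \<in> P" using chi assms AP[of 1] k2 by auto
  ultimately show ?thesis using pow_mono nat_le_linear by metis
qed

lemma chi_le: assumes "p \<in> P" "q \<in> P" "chi p = chi q" "sq (idx p) (idx q)" shows "le p q"
proof -
  have i: "idx p \<in> I" "p \<in> A (idx p)" "idx q \<in> I" "q \<in> A (idx q)" using idx assms by auto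
  show ?thesis
  proof (rule ccontr)
    assume "\<not> le p q"
    hence "le q p" using chi_comp assms by blast
    hence "sq (idx q) (idx p)" using le_sq i by blast
    hence "idx q = idx p" using sq_antisym Aeq i assms by blast
    hence "q = p" using Aanti i \<open>le q p\<close> by metis
    thus False using \<open>\<not> le p q\<close> refl assms by blast
  qed
qed


lemma adj_sym: "bip_adj le X Y u v \<Longrightarrow> bip_adj le X Y v u"
  unfolding bip_adj_def by blast

lemma rt_sym: "(bip_adj le X Y)\<^sup>*\<^sup>* u v \<Longrightarrow> (bip_adj le X Y)\<^sup>*\<^sup>* v u"
proof (induct rule: rtranclp_induct)
  case base thus ?case by simp
next
  case (step y z)
  show ?case using converse_rtranclp_into_rtranclp[OF adj_sym[OF step(2)] step(3)] .
qed

lemma comp_sets: "is_component le X Y N \<Longrightarrow> fst N \<subseteq> X \<and> snd N \<subseteq> Y"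
  unfolding is_component_def by auto

lemma comp_eq: assumes "is_component le X Y N1" "is_component le X Y N2"
  "u \<in> fst N1 \<union> snd N1" "u \<in> fst N2 \<union> snd N2" shows "N1 = N2"
proof -
  obtain v1 where v1: "fst N1 = {u. (bip_adj le X Y)\<^sup>*\<^sup>* v1 u} \<inter> X" "snd N1 = {u. (bip_adj le X Y)\<^sup>*\<^sup>* v1 u} \<inter> Y"
    using assms(1) unfolding is_component_def by blast
  obtain v2 where v2: "fst N2 = {u. (bip_adj le X Y)\<^sup>*\<^sup>* v2 u} \<inter> X" "snd N2 = {u. (bip_adj le X Y)\<^sup>*\<^sup>* v2 u} \<inter> Y"
    using assms(2) unfolding is_component_def by blast
  have a: "(bip_adj le X Y)\<^sup>*\<^sup>* v1 u" "(bip_adj le X Y)\<^sup>*\<^sup>* v2 u" using assms(3,4) v1 v2 by auto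
  have 12: "(bip_adj le X Y)\<^sup>*\<^sup>* v1 v2" "(bip_adj le X Y)\<^sup>*\<^sup>* v2 v1"
    using rtranclp_trans[OF a(1) rt_sym[OF a(2)]] rtranclp_trans[OF a(2) rt_sym[OF a(1)]] by auto
  have "{u. (bip_adj le X Y)\<^sup>*\<^sup>* v1 u} = {u. (bip_adj le X Y)\<^sup>*\<^sup>* v2 u}"
  proof (intro set_eqI iffI)
    fix x assume "x \<in> {u. (bip_adj le X Y)\<^sup>*\<^sup>* v1 u}"
    thus "x \<in> {u. (bip_adj le X Y)\<^sup>*\<^sup>* v2 u}" using rtranclp_trans[OF 12(2)] by auto
  next
    fix x assume "x \<in> {u. (bip_adj le X Y)\<^sup>*\<^sup>* v2 u}"
    thus "x \<in> {u. (bip_adj le X Y)\<^sup>*\<^sup>* v1 u}" using rtranclp_trans[OF 12(1)] by auto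
  qed
  hence "fst N1 = fst N2" "snd N1 = snd N2" using v1 v2 by auto
  thus ?thesis by (simp add: prod_eq_iff)
qed

lemma comp_step: assumes "is_component le X Y N" "u \<in> fst N \<union> snd N" "bip_adj le X Y u u'"
  shows "u' \<in> fst N \<union> snd N"
proof -
  obtain v where v: "fst N = {u. (bip_adj le X Y)\<^sup>*\<^sup>* v u} \<inter> X" "snd N = {u. (bip_adj le X Y)\<^sup>*\<^sup>* v u} \<inter> Y"
    using assms(1) unfolding is_component_def by blast
  have "(bip_adj le X Y)\<^sup>*\<^sup>* v u" using assms(2) v by auto
  hence "(bip_adj le X Y)\<^sup>*\<^sup>* v u'" using rtranclp.rtrancl_into_rtrancl assms(3) by metis
  moreover have "u' \<in> X \<union> Y" using assms(3) unfolding bip_adj_def by auto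
  ultimately show ?thesis using v by auto
qed

lemma int_disj: assumes "p \<in> I" "s \<in> I" "p \<noteq> s" "is_component le (A p) (A s) N1" "is_component le (A p) (A s) N2"
  "z \<in> node_int P le N1" "z \<in> node_int P le N2" shows "N1 = N2"
proof -
  obtain x1 where x1: "x1 \<in> fst N1" "le x1 z" using assms(6) unfolding node_int_def up_set_def by blast
  obtain y2 where y2: "y2 \<in> snd N2" "le z y2" using assms(7) unfolding node_int_def down_set_def by blast
  have zP: "z \<in> P" using assms(6) unfolding node_int_def up_set_def by blast
  have x1A: "x1 \<in> A p" using x1 comp_sets[OF assms(4)] by blast
  have y2A: "y2 \<in> A s" using y2 comp_sets[OF assms(5)] by blast
  have "x1 \<in> P" "y2 \<in> P" using x1A y2A AP assms by blast+
  hence "le x1 y2" using trans[of x1 z y2] x1 y2 zP by blast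
  moreover have "x1 \<noteq> y2" using x1A y2A Adisj assms by blast
  ultimately have "bip_adj le (A p) (A s) x1 y2" using x1A y2A unfolding bip_adj_def less_of_def by blast
  hence "y2 \<in> fst N1 \<union> snd N1" using comp_step[OF assms(4)] x1 by blast
  thus ?thesis using comp_eq[OF assms(4,5)] y2 by blast
qed

lemma parent_left: assumes I: "m\<in>I" "p\<in>I" "s\<in>I" and sl: "sqs p m" "sqs m s"
  and c: "is_component le (A p) (A m) N'"
  shows "\<exists>N. is_component le (A p) (A s) N \<and> node_int P le N' \<subset> node_int P le N"
proof -
  let ?G1 = "bip_adj le (A p) (A m)"
  let ?G = "bip_adj le (A p) (A s)"
  have ps: "p \<noteq> s" "p \<noteq> m" "m \<noteq> s" using sl sqs_trans[OF I(2,1,3) sl] unfolding sqlt_def by auto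
  have dj: "A p \<inter> A s = {}" "A p \<inter> A m = {}" "A m \<inter> A s = {}" using Adisj I ps by auto
  obtain v where v: "v \<in> A p \<union> A m" "fst N' = {u. ?G1\<^sup>*\<^sup>* v u} \<inter> A p" "snd N' = {u. ?G1\<^sup>*\<^sup>* v u} \<inter> A m"
    using c unfolding is_component_def by blast
  obtain x0 where x0: "x0 \<in> A p" "?G1\<^sup>*\<^sup>* v x0"
  proof (cases "v \<in> A p")
    case True thus ?thesis using that by blast
  next
    case False
    hence "v \<in> A m" using v by blast
    then obtain a where a: "a \<in> A p" "less_of le a v" using sqs_up I sl by blast
    hence "?G1 v a" using \<open>v \<in> A m\<close> unfolding bip_adj_def by blast
    thus ?thesis using that a by blast
  qed
  have claim: "(u \<in> A p \<longrightarrow> ?G\<^sup>*\<^sup>* x0 u) \<and> (u \<in> A m \<longrightarrow> (\<forall>d\<in>A s. le u d \<longrightarrow> ?G\<^sup>*\<^sup>* x0 d))"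
    if "?G1\<^sup>*\<^sup>* x0 u" for u
    using that
  proof (induct rule: rtranclp_induct)
    case base thus ?case using x0 dj by blast
  next
    case (step u u')
    from step(2)[unfolded bip_adj_def] show ?case
    proof
      assume h: "u \<in> A p \<and> u' \<in> A m \<and> less_of le u u'"
      have "u' \<notin> A p" using h dj by blast
      moreover have "?G\<^sup>*\<^sup>* x0 d" if d: "d \<in> A s" "le u' d" for d
      proof -
        have "u \<in> P" "u' \<in> P" "d \<in> P" using h d AP I by blast+
        hence "le u d" using trans[of u u' d] h d unfolding less_of_def by blast
        moreover have "u \<noteq> d" using h d dj by blast
        ultimately have "?G u d" using h d unfolding bip_adj_def less_of_def by blast
        thus ?thesis using step(3) h by (meson rtranclp.rtrancl_into_rtrancl)
      qed
      ultimately show ?case by blast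
    next
      assume h: "u' \<in> A p \<and> u \<in> A m \<and> less_of le u' u"
      have "u' \<notin> A m" using h dj by blast
      moreover have "?G\<^sup>*\<^sup>* x0 u'"
      proof -
        obtain d where d: "d \<in> A s" "le u d" using sq_down[of m s] sl h unfolding sqlt_def by blast
        have "?G\<^sup>*\<^sup>* x0 d" using step(3) h d by blast
        have "u \<in> P" "u' \<in> P" "d \<in> P" using h d AP I by blast+
        hence "le u' d" using trans[of u' u d] h d unfolding less_of_def by blast
        moreover have "u' \<noteq> d" using h d dj by blast
        ultimately have "?G d u'" using h d unfolding bip_adj_def less_of_def by blast
        thus ?thesis using \<open>?G\<^sup>*\<^sup>* x0 d\<close> by (meson rtranclp.rtrancl_into_rtrancl)
      qed
      ultimately show ?case by blast
    qed
  qed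
  define N where "N = ({u. ?G\<^sup>*\<^sup>* x0 u} \<inter> A p, {u. ?G\<^sup>*\<^sup>* x0 u} \<inter> A s)"
  have cN: "is_component le (A p) (A s) N" unfolding is_component_def N_def using x0 by auto
  have x0v: "?G1\<^sup>*\<^sup>* x0 v" using rt_sym x0 by metis
  have f1: "fst N' \<subseteq> fst N"
  proof
    fix u assume "u \<in> fst N'"
    hence "?G1\<^sup>*\<^sup>* v u" "u \<in> A p" using v by auto
    hence "?G1\<^sup>*\<^sup>* x0 u" using x0v rtranclp_trans by metis
    thus "u \<in> fst N" using claim \<open>u \<in> A p\<close> unfolding N_def by auto
  qed
  have s1: "d \<in> snd N" if "y \<in> snd N'" "d \<in> A s" "le y d" for y d
  proof -
    have "?G1\<^sup>*\<^sup>* v y" "y \<in> A m" using that v by auto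
    hence "?G1\<^sup>*\<^sup>* x0 y" using x0v rtranclp_trans by metis
    thus ?thesis using claim \<open>y \<in> A m\<close> that unfolding N_def by auto
  qed
  have sub: "node_int P le N' \<subseteq> node_int P le N"
  proof
    fix z assume z: "z \<in> node_int P le N'"
    then obtain x y where xy: "x \<in> fst N'" "le x z" "y \<in> snd N'" "le z y" "z \<in> P"
      unfolding node_int_def up_set_def down_set_def by blast
    have yA: "y \<in> A m" using xy v by auto
    obtain d where d: "d \<in> A s" "le y d" using sq_down[of m s] sl yA unfolding sqlt_def by blast
    have "d \<in> snd N" using s1 xy d by blast
    moreover have "le z d" using trans[of z y d] xy d yA AP[of m] AP[of s] I by blast
    moreover have "x \<in> fst N" using f1 xy by blast
    ultimately show "z \<in> node_int P le N" using xy unfolding node_int_def up_set_def down_set_def by blast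
  qed
  have x0N': "x0 \<in> fst N'" using x0 v by auto
  obtain y where y: "y \<in> A m" "less_of le x0 y" using sqs_less I sl x0 by blast
  have "?G1 x0 y" using x0 y unfolding bip_adj_def by blast
  hence "y \<in> fst N' \<union> snd N'" using comp_step[OF c] x0N' by blast
  hence yN': "y \<in> snd N'" using y v dj by blast
  obtain d where d: "d \<in> A s" "le y d" using sq_down[of m s] sl y unfolding sqlt_def by blast
  have dN: "d \<in> snd N" using s1 yN' d by blast
  have dP: "d \<in> P" "y \<in> P" "x0 \<in> P" using d y x0 AP I by blast+
  have "le x0 d" using trans[of x0 y d] dP y d unfolding less_of_def by blast
  hence dI: "d \<in> node_int P le N" using dN x0N' f1 refl dP unfolding node_int_def up_set_def down_set_def by blast
  have "d \<notin> node_int P le N'"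
  proof
    assume "d \<in> node_int P le N'"
    then obtain y' where y': "y' \<in> snd N'" "le d y'" unfolding node_int_def down_set_def by blast
    have y'A: "y' \<in> A m" using y' v by auto
    obtain d'' where d'': "d'' \<in> A s" "le y' d''" using sq_down[of m s] sl y'A unfolding sqlt_def by blast
    have "y' \<in> P" "d'' \<in> P" using y'A d'' AP I by blast+
    hence "le d d''" using trans[of d y' d''] dP y' d'' by blast
    hence "d = d''" using Aanti I d d'' by blast
    hence "d = y'" using antisym y' d'' dP \<open>y'\<in>P\<close> by blast
    thus False using y'A d dj by blast
  qed
  thus ?thesis using cN sub dI by blast
qed

lemma parent_right: assumes I: "m\<in>I" "p\<in>I" "s\<in>I" and sl: "sqs p m" "sqs m s"
  and c: "is_component le (A m) (A s) N'"
  shows "\<exists>N. is_component le (A p) (A s) N \<and> node_int P le N' \<subset> node_int P le N"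
proof -
  let ?G2 = "bip_adj le (A m) (A s)"
  let ?G = "bip_adj le (A p) (A s)"
  have ps: "p \<noteq> s" "p \<noteq> m" "m \<noteq> s" using sl sqs_trans[OF I(2,1,3) sl] unfolding sqlt_def by auto
  have dj: "A p \<inter> A s = {}" "A p \<inter> A m = {}" "A m \<inter> A s = {}" using Adisj I ps by auto
  obtain v where v: "v \<in> A m \<union> A s" "fst N' = {u. ?G2\<^sup>*\<^sup>* v u} \<inter> A m" "snd N' = {u. ?G2\<^sup>*\<^sup>* v u} \<inter> A s"
    using c unfolding is_component_def by blast
  obtain y0 where y0: "y0 \<in> A s" "?G2\<^sup>*\<^sup>* v y0"
  proof (cases "v \<in> A s")
    case True thus ?thesis using that by blast
  next
    case False
    hence "v \<in> A m" using v by blast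
    then obtain a where a: "a \<in> A s" "less_of le v a" using sqs_less I sl by blast
    hence "?G2 v a" using \<open>v \<in> A m\<close> unfolding bip_adj_def by blast
    thus ?thesis using that a by blast
  qed
  have claim: "(u \<in> A s \<longrightarrow> ?G\<^sup>*\<^sup>* y0 u) \<and> (u \<in> A m \<longrightarrow> (\<forall>c\<in>A p. le c u \<longrightarrow> ?G\<^sup>*\<^sup>* y0 c))"
    if "?G2\<^sup>*\<^sup>* y0 u" for u
    using that
  proof (induct rule: rtranclp_induct)
    case base thus ?case using y0 dj by blast
  next
    case (step u u')
    from step(2)[unfolded bip_adj_def] show ?case
    proof
      assume h: "u \<in> A m \<and> u' \<in> A s \<and> less_of le u u'"
      have "u' \<notin> A m" using h dj by blast
      moreover have "?G\<^sup>*\<^sup>* y0 u'"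
      proof -
        obtain c where cc: "c \<in> A p" "less_of le c u" using sqs_up I sl h by blast
        have "?G\<^sup>*\<^sup>* y0 c" using step(3) h cc unfolding less_of_def by blast
        have "u \<in> P" "u' \<in> P" "c \<in> P" using h cc AP I by blast+
        hence "le c u'" using trans[of c u u'] h cc unfolding less_of_def by blast
        moreover have "c \<noteq> u'" using h cc dj by blast
        ultimately have "?G c u'" using h cc unfolding bip_adj_def less_of_def by blast
        thus ?thesis using \<open>?G\<^sup>*\<^sup>* y0 c\<close> by (meson rtranclp.rtrancl_into_rtrancl)
      qed
      ultimately show ?case by blast
    next
      assume h: "u' \<in> A m \<and> u \<in> A s \<and> less_of le u' u"
      have "u' \<notin> A s" using h dj by blast
      moreover have "?G\<^sup>*\<^sup>* y0 cc" if cc: "cc \<in> A p" "le cc u'" for cc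
      proof -
        have "u \<in> P" "u' \<in> P" "cc \<in> P" using h cc AP I by blast+
        hence "le cc u" using trans[of cc u' u] h cc unfolding less_of_def by blast
        moreover have "cc \<noteq> u" using h cc dj by blast
        ultimately have "?G u cc" using h cc unfolding bip_adj_def less_of_def by blast
        thus ?thesis using step(3) h by (meson rtranclp.rtrancl_into_rtrancl)
      qed
      ultimately show ?case by blast
    qed
  qed
  define N where "N = ({u. ?G\<^sup>*\<^sup>* y0 u} \<inter> A p, {u. ?G\<^sup>*\<^sup>* y0 u} \<inter> A s)"
  have cN: "is_component le (A p) (A s) N" unfolding is_component_def N_def using y0 by auto
  have y0v: "?G2\<^sup>*\<^sup>* y0 v" using rt_sym y0 by metis
  have s1: "snd N' \<subseteq> snd N"
  proof
    fix u assume "u \<in> snd N'"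
    hence "?G2\<^sup>*\<^sup>* v u" "u \<in> A s" using v by auto
    hence "?G2\<^sup>*\<^sup>* y0 u" using y0v rtranclp_trans by metis
    thus "u \<in> snd N" using claim \<open>u \<in> A s\<close> unfolding N_def by auto
  qed
  have f1: "cc \<in> fst N" if "x \<in> fst N'" "cc \<in> A p" "le cc x" for x cc
  proof -
    have "?G2\<^sup>*\<^sup>* v x" "x \<in> A m" using that v by auto
    hence "?G2\<^sup>*\<^sup>* y0 x" using y0v rtranclp_trans by metis
    thus ?thesis using claim \<open>x \<in> A m\<close> that unfolding N_def by auto
  qed
  have sub: "node_int P le N' \<subseteq> node_int P le N"
  proof
    fix z assume z: "z \<in> node_int P le N'"
    then obtain x y where xy: "x \<in> fst N'" "le x z" "y \<in> snd N'" "le z y" "z \<in> P"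
      unfolding node_int_def up_set_def down_set_def by blast
    have xA: "x \<in> A m" using xy v by auto
    obtain cc where cc: "cc \<in> A p" "less_of le cc x" using sqs_up I sl xA by blast
    have "cc \<in> fst N" using f1 xy cc unfolding less_of_def by blast
    moreover have "le cc z" using trans[of cc x z] xy cc xA AP[of m] AP[of p] I unfolding less_of_def by blast
    moreover have "y \<in> snd N" using s1 xy by blast
    ultimately show "z \<in> node_int P le N" using xy unfolding node_int_def up_set_def down_set_def by blast
  qed
  have y0N': "y0 \<in> snd N'" using y0 v by auto
  obtain x where x: "x \<in> A m" "less_of le x y0" using sqs_up I sl y0 by blast
  have "?G2 y0 x" using x y0 unfolding bip_adj_def by blast
  hence "x \<in> fst N' \<union> snd N'" using comp_step[OF c] y0N' by blast
  hence xN': "x \<in> fst N'" using x v dj by blast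
  obtain cc where cc: "cc \<in> A p" "less_of le cc x" using sqs_up I sl x by blast
  have cN1: "cc \<in> fst N" using f1 xN' cc unfolding less_of_def by blast
  have dP: "cc \<in> P" "x \<in> P" "y0 \<in> P" using cc x y0 AP I by blast+
  have "le cc y0" using trans[of cc x y0] dP x cc unfolding less_of_def by blast
  hence dI: "cc \<in> node_int P le N" using cN1 y0N' s1 refl dP unfolding node_int_def up_set_def down_set_def by blast
  have "cc \<notin> node_int P le N'"
  proof
    assume "cc \<in> node_int P le N'"
    then obtain x' where x': "x' \<in> fst N'" "le x' cc" unfolding node_int_def up_set_def by blast
    have x'A: "x' \<in> A m" using x' v by auto
    obtain c'' where c'': "c'' \<in> A p" "less_of le c'' x'" using sqs_up I sl x'A by blast
    have "x' \<in> P" "c'' \<in> P" using x'A c'' AP I by blast+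
    hence "le c'' cc" using trans[of c'' x' cc] dP x' c'' unfolding less_of_def by blast
    hence "c'' = cc" using Aanti I cc c'' by blast
    hence "cc = x'" using antisym x' c'' dP \<open>x'\<in>P\<close> unfolding less_of_def by blast
    thus False using x'A cc dj by blast
  qed
  thus ?thesis using cN sub dI by blast
qed


lemma consec_I: "consec P le A t p s \<Longrightarrow> t \<le> k \<Longrightarrow> p \<in> I \<and> s \<in> I \<and> sqs p s \<and> p \<le> t \<and> s \<le> t"
  unfolding consec_def by auto

lemma consec_restrict: assumes "consec P le A t p s" "max p s \<le> t0" "t0 \<le> t"
  shows "consec P le A t0 p s"
  using assms unfolding consec_def by auto

lemma gap_insert: assumes m: "m \<in> {3..k}"
  shows "\<exists>p s. consec P le A (m-1) p s \<and> sqs p m \<and> sqs m s \<and>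
     (\<forall>q\<in>{1..m-1}. sqs q m \<longrightarrow> sq q p) \<and> (\<forall>q\<in>{1..m-1}. sqs m q \<longrightarrow> sq s q)"
proof -
  let ?L = "{q\<in>{1..m-1}. sqs q m}"
  let ?U = "{q\<in>{1..m-1}. sqs m q}"
  have mI: "m \<in> I" using m by auto
  have sub: "{1..m-1} \<subseteq> I" using m by auto
  have "1 \<in> I" "2 \<in> I" using k2 by auto
  have "A 1 \<noteq> A m" using Aeq[OF \<open>1\<in>I\<close> mI] m by auto
  hence "1 \<in> ?L" using sq_bot[OF mI] m unfolding sqlt_def by auto
  have "A m \<noteq> A 2" using Aeq[OF mI \<open>2\<in>I\<close>] m by auto
  hence "2 \<in> ?U" using sq_top[OF mI] m unfolding sqlt_def by auto
  have fL: "finite ?L" "?L \<noteq> {}" using \<open>1 \<in> ?L\<close> by auto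
  have fU: "finite ?U" "?U \<noteq> {}" using \<open>2 \<in> ?U\<close> by auto
  obtain p where p: "p \<in> ?L" "\<forall>q\<in>?L. r q \<le> r p" using ex_max_nat[OF fL, of r] by blast
  obtain s where s: "s \<in> ?U" "\<forall>q\<in>?U. r s \<le> r q" using ex_min_nat[OF fU, of r] by blast
  have pI: "p \<in> I" "s \<in> I" using p s sub by auto
  have ps: "sqs p s" using sqs_trans[OF pI(1) mI pI(2)] p s by auto
  have nb: "\<not> (\<exists>q\<in>{1..m-1}. sqs p q \<and> sqs q s)"
  proof
    assume "\<exists>q\<in>{1..m-1}. sqs p q \<and> sqs q s"
    then obtain q where q: "q \<in> {1..m-1}" "sqs p q" "sqs q s" by blast
    have qI: "q \<in> I" using q sub by auto
    have "sqs q m \<or> q = m \<or> sqs m q" using sq_cases[OF qI mI] .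
    moreover have "q \<noteq> m" using q m by auto
    moreover have "\<not> sqs q m"
    proof
      assume "sqs q m"
      hence "q \<in> ?L" using q by auto
      hence "r q \<le> r p" using p by auto
      moreover have "r p < r q" using r_mono[OF pI(1) qI q(2)] .
      ultimately show False by simp
    qed
    moreover have "\<not> sqs m q"
    proof
      assume "sqs m q"
      hence "q \<in> ?U" using q by auto
      hence "r s \<le> r q" using s by auto
      moreover have "r q < r s" using r_mono[OF qI pI(2) q(3)] .
      ultimately show False by simp
    qed
    ultimately show False by blast
  qed
  have "consec P le A (m-1) p s" unfolding consec_def using p s ps nb by auto
  moreover have "\<forall>q\<in>{1..m-1}. sqs q m \<longrightarrow> sq q p"
  proof (intro ballI impI)
    fix q assume q: "q \<in> {1..m-1}" "sqs q m"
    hence "r q \<le> r p" using p by auto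
    thus "sq q p" using r_sq q sub pI by auto
  qed
  moreover have "\<forall>q\<in>{1..m-1}. sqs m q \<longrightarrow> sq s q"
  proof (intro ballI impI)
    fix q assume q: "q \<in> {1..m-1}" "sqs m q"
    hence "r s \<le> r q" using s by auto
    thus "sq s q" using r_sq q sub pI by auto
  qed
  ultimately show ?thesis using p s by blast
qed

lemma child_int: "node_child P le A k M N \<Longrightarrow> node_int P le M \<subset> node_int P le N"
  unfolding node_child_def by blast

lemma anc_int: "(node_child P le A k)\<^sup>+\<^sup>+ M N \<Longrightarrow> node_int P le M \<subset> node_int P le N"
proof (induct rule: tranclp_induct)
  case (base y) thus ?case using child_int by blast
next
  case (step y z) thus ?case using child_int by blast
qed

lemma tree: "consec P le A t' p' s' \<Longrightarrow> t' \<le> k \<Longrightarrow> is_component le (A p') (A s') N' \<Longrightarrow>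
   consec P le A t p s \<Longrightarrow> t \<le> k \<Longrightarrow> sq p p' \<Longrightarrow> sq s' s \<Longrightarrow> (p, s) \<noteq> (p', s') \<Longrightarrow>
   \<exists>N. is_component le (A p) (A s) N \<and> (node_child P le A k)\<^sup>+\<^sup>+ N' N"
proof (induct "max p' s'" arbitrary: p' s' t' N' rule: less_induct)
  case less
  note c' = consec_I[OF less.prems(1,2)]
  note c = consec_I[OF less.prems(4,5)]
  define m where "m = max p' s'"
  have pns: "p' \<noteq> s'" using c' unfolding sqlt_def by auto
  have mt: "m \<le> t'" using c' unfolding m_def by auto
  have key: "max p s < m"
  proof (rule ccontr)
    assume "\<not> max p s < m"
    hence le: "m \<le> max p s" by linarith
    have "max p s \<le> t" using c by auto
    hence c0: "consec P le A (max p s) p s" using consec_restrict[OF less.prems(4)] by auto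
    have inr: "p' \<in> {1..max p s}" "s' \<in> {1..max p s}" using le c' unfolding m_def by auto
    show False
    proof (cases "p = p'")
      case False
      hence "A p \<noteq> A p'" using c c' Aeq by blast
      hence "sqs p p'" using less.prems(6) unfolding sqlt_def by simp
      moreover have "sqs p' s" using sqs_sq_trans[of p' s' s] c c' less.prems(7) by blast
      ultimately show False using c0 inr unfolding consec_def by blast
    next
      case True
      hence "s \<noteq> s'" using less.prems(8) by simp
      hence "A s' \<noteq> A s" using c c' Aeq by blast
      hence "sqs s' s" using less.prems(7) unfolding sqlt_def by simp
      moreover have "sqs p s'" using True c' by simp
      ultimately show False using c0 inr unfolding consec_def by blast
    qed
  qed
  have m3: "m \<in> {3..k}"
  proof -
    have "p \<noteq> s" using c unfolding sqlt_def by auto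
    hence "2 \<le> max p s" using c by auto
    thus ?thesis using key c' unfolding m_def by auto
  qed
  have mI: "m \<in> I" using m3 by auto
  have cm: "consec P le A m p' s'" using consec_restrict[OF less.prems(1)] mt unfolding m_def by simp
  obtain p'' s'' where g: "consec P le A (m-1) p'' s''" "sqs p'' m" "sqs m s''"
     "\<forall>q\<in>{1..m-1}. sqs q m \<longrightarrow> sq q p''" "\<forall>q\<in>{1..m-1}. sqs m q \<longrightarrow> sq s'' q"
    using gap_insert[OF m3] by blast
  have gI: "p'' \<in> I" "s'' \<in> I" "m - 1 \<le> k" using consec_I[of "m-1" p'' s''] g(1) m3 by auto
  have pm: "p \<noteq> m" "s \<noteq> m" "p \<in> {1..m-1}" "s \<in> {1..m-1}" using key c by auto
  have spm: "sqs p m"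
  proof (cases "m = p'")
    case True thus ?thesis using less.prems(6) pm Aeq c mI unfolding sqlt_def by metis
  next
    case False
    hence "m = s'" unfolding m_def by (simp add: max_def split: if_splits)
    thus ?thesis using sq_sqs_trans[of p p' s'] less.prems(6) c c' by blast
  qed
  have ssm: "sqs m s"
  proof (cases "m = s'")
    case True thus ?thesis using less.prems(7) pm Aeq c mI unfolding sqlt_def by metis
  next
    case False
    hence "m = p'" unfolding m_def by (simp add: max_def split: if_splits)
    thus ?thesis using sqs_sq_trans[of p' s' s] less.prems(7) c c' by blast
  qed
  have pp: "sq p p''" using g(4) pm spm by blast
  have ss: "sq s'' s" using g(5) pm ssm by blast
  have step: "\<exists>N''. is_component le (A p'') (A s'') N'' \<and> node_child P le A k N' N''"
  proof (cases "m = s'")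
    case True
    hence p'm: "p' \<noteq> m" "p' \<in> {1..m-1}" "sqs p' m" using c' pns unfolding m_def by auto
    have "sq p' p''" using g(4) p'm by blast
    have "p'' = p'"
    proof (rule ccontr)
      assume "p'' \<noteq> p'"
      hence "A p' \<noteq> A p''" using Aeq c' gI by metis
      hence "sqs p' p''" using \<open>sq p' p''\<close> unfolding sqlt_def by simp
      moreover have "p'' \<in> {1..m}" using gI consec_I[OF g(1)] m3 by auto
      ultimately show False using cm g(2) True unfolding consec_def by blast
    qed
    hence comp: "is_component le (A p'') (A m) N'" using less.prems(3) True by simp
    obtain N'' where N'': "is_component le (A p'') (A s'') N''" "node_int P le N' \<subset> node_int P le N''"
      using parent_left[OF mI gI(1,2) g(2,3) comp] by blast
    have "node_child P le A k N' N''" unfolding node_child_def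
      using m3 g(1,2,3) comp N'' by blast
    thus ?thesis using N'' by blast
  next
    case False
    hence Tm: "m = p'" unfolding m_def by (simp add: max_def split: if_splits)
    hence s'm: "s' \<noteq> m" "s' \<in> {1..m-1}" "sqs m s'" using c' pns unfolding m_def by auto
    have "sq s'' s'" using g(5) s'm by blast
    have "s'' = s'"
    proof (rule ccontr)
      assume "s'' \<noteq> s'"
      hence "A s'' \<noteq> A s'" using Aeq c' gI by metis
      hence "sqs s'' s'" using \<open>sq s'' s'\<close> unfolding sqlt_def by simp
      moreover have "s'' \<in> {1..m}" using gI consec_I[OF g(1)] m3 by auto
      ultimately show False using cm g(3) Tm unfolding consec_def by blast
    qed
    hence comp: "is_component le (A m) (A s'') N'" using less.prems(3) Tm by simp
    obtain N'' where N'': "is_component le (A p'') (A s'') N''" "node_int P le N' \<subset> node_int P le N''"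
      using parent_right[OF mI gI(1,2) g(2,3) comp] by blast
    have "node_child P le A k N' N''" unfolding node_child_def
      using m3 g(1,2,3) comp N'' by blast
    thus ?thesis using N'' by blast
  qed
  then obtain N'' where N'': "is_component le (A p'') (A s'') N''" "node_child P le A k N' N''" by blast
  show ?case
  proof (cases "(p, s) = (p'', s'')")
    case True
    hence "p = p''" "s = s''" by auto
    thus ?thesis using N''(1) tranclp.r_into_trancl[of "node_child P le A k", OF N''(2)] by blast
  next
    case False
    have "max p'' s'' < max p' s'" using consec_I[OF g(1)] m3 gI unfolding m_def[symmetric] by auto
    then obtain N where N: "is_component le (A p) (A s) N" "(node_child P le A k)\<^sup>+\<^sup>+ N'' N"
      using less.hyps[OF _ g(1) gI(3) N''(1) less.prems(4,5) pp ss False] by blast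
    thus ?thesis using tranclp_into_tranclp2[OF N''(2) N(2)] by blast
  qed
qed


definition U where "U v i = {q \<in> A i. le v q}"

lemma U_fin: "i \<in> I \<Longrightarrow> finite (U v i)"
  using fin AP finite_subset unfolding U_def by (metis (no_types, lifting) mem_Collect_eq subsetI)

lemma cnt_mono: assumes "v \<in> P" "i \<in> I" "j \<in> I" "sq i j" shows "card (U v i) \<le> card (U v j)"
proof -
  let ?S = "(A j - U v j) \<union> U v i"
  have fA: "finite (A i)" "finite (A j)" using fin AP assms finite_subset by blast+
  have Ui: "U v i \<subseteq> A i" "U v j \<subseteq> A j" unfolding U_def by auto
  have ac: "antichain_on P le ?S"
    unfolding antichain_on_def
  proof (intro conjI ballI impI)
    show "?S \<subseteq> P" using AP assms Ui by blast
  next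
    fix x y assume x: "x \<in> ?S" and y: "y \<in> ?S" and xy: "le x y"
    have xP: "x \<in> P" "y \<in> P" using x y AP assms Ui by blast+
    show "x = y"
    proof (cases "x \<in> U v i")
      case xU: True
      show ?thesis
      proof (cases "y \<in> U v i")
        case True thus ?thesis using xU Aanti assms Ui xy by blast
      next
        case False
        hence yA: "y \<in> A j" "\<not> le v y" using y unfolding U_def by auto
        have "le v x" using xU unfolding U_def by auto
        hence "le v y" using trans[of v x y] xP assms xy by blast
        thus ?thesis using yA by blast
      qed
    next
      case xN: False
      hence xA: "x \<in> A j" "\<not> le v x" using x unfolding U_def by auto
      show ?thesis
      proof (cases "y \<in> U v i")
        case True
        hence yA: "y \<in> A i" "le v y" unfolding U_def by auto
        obtain y' where y': "y' \<in> A j" "le y y'" using sq_down assms yA by blast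
        have "y' \<in> P" using y' AP assms by blast
        hence "le x y'" using trans[of x y y'] xP xy y' by blast
        hence "x = y'" using Aanti assms xA y' by blast
        hence "x = y" using antisym xP xy y' by blast
        thus ?thesis .
      next
        case False
        hence "y \<in> A j" using y by auto
        thus ?thesis using Aanti assms xA xy by blast
      qed
    qed
  qed
  have "card ?S \<le> w" using width_ub[OF ac] .
  moreover have "card ?S = card (A j - U v j) + card (U v i)"
    by (rule card_Un_disjoint) (use fA Ui in \<open>auto simp: U_def intro: finite_subset\<close>)
  moreover have "card (A j - U v j) = w - card (U v j)"
    using card_Diff_subset[OF finite_subset[OF Ui(2) fA(2)] Ui(2)] Acard assms by simp
  moreover have "card (U v j) \<le> w" using card_mono[OF fA(2) Ui(2)] Acard assms by simp
  ultimately show ?thesis by linarith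
qed

lemma cnt_strict: assumes "v \<in> P" "t \<in> {2..k}" "consec P le A t p s" "a \<in> A p" "b \<in> A s"
  "less_of le a b" "\<not> le v a" "le v b" shows "card (U v p) < card (U v s)"
proof -
  have I: "p \<in> I" "s \<in> I" using consec_I assms(2,3) by auto
  obtain f where f: "bij_betw f (A p) (A s)" "\<forall>x\<in>A p. less_of le x (f x)" "f a = b"
    using regular[OF assms(2,3)] assms(4,5,6) unfolding bip_regular_def by blast
  have "f ` U v p \<subseteq> U v s"
  proof
    fix z assume "z \<in> f ` U v p"
    then obtain x where x: "x \<in> U v p" "z = f x" by blast
    have xA: "x \<in> A p" "le v x" using x unfolding U_def by auto
    have fx: "f x \<in> A s" using f(1) xA unfolding bij_betw_def by blast
    have "le x (f x)" using f(2) xA unfolding less_of_def by blast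
    hence "le v (f x)" using trans[of v x "f x"] assms(1) xA fx AP I by blast
    thus "z \<in> U v s" using x fx unfolding U_def by blast
  qed
  moreover have "b \<in> U v s" using assms unfolding U_def by blast
  moreover have "b \<notin> f ` U v p"
  proof
    assume "b \<in> f ` U v p"
    then obtain x where x: "x \<in> U v p" "f x = b" by blast
    have "x \<in> A p" using x unfolding U_def by auto
    hence "x = a" using f(1,3) x assms(4) unfolding bij_betw_def inj_on_def by metis
    thus False using x assms(7) unfolding U_def by blast
  qed
  ultimately have "f ` U v p \<subset> U v s" by blast
  hence "card (f ` U v p) < card (U v s)" using psubset_card_mono[OF U_fin[OF I(2)]] by blast
  moreover have "card (f ` U v p) = card (U v p)"
  proof -
    have "inj_on f (A p)" using f(1) unfolding bij_betw_def by blast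
    moreover have "U v p \<subseteq> A p" unfolding U_def by blast
    ultimately have "inj_on f (U v p)" by (rule inj_on_subset)
    thus ?thesis by (rule card_image)
  qed
  ultimately show ?thesis by simp
qed

end

locale RPF = RP +
  fixes F
  assumes af: "ancestor_free P le A k F"
begin

lemma edge_node: assumes "e \<in> edge_set le F"
  shows "\<exists>N t p s. N \<in> F \<and> t \<in> {2..k} \<and> consec P le A t p s \<and> is_component le (A p) (A s) N
     \<and> fst e \<in> fst N \<and> snd e \<in> snd N \<and> fst e \<in> A p \<and> snd e \<in> A s \<and> less_of le (fst e) (snd e)"
proof -
  obtain N where N: "N \<in> F" "fst e \<in> fst N" "snd e \<in> snd N" "less_of le (fst e) (snd e)"
    using assms unfolding edge_set_def by auto
  have "N \<in> nodes P le A k" using af N unfolding ancestor_free_def by blast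
  then obtain t p s where tps: "t \<in> {2..k}" "consec P le A t p s" "is_component le (A p) (A s) N"
    unfolding nodes_def by blast
  have "fst e \<in> A p" "snd e \<in> A s" using comp_sets[OF tps(3)] N by auto
  thus ?thesis using N tps by blast
qed

lemma edge_P: "e \<in> edge_set le F \<Longrightarrow> fst e \<in> P \<and> snd e \<in> P"
  using edge_node consec_I AP by (metis atLeastAtMost_iff subsetD)

lemma NN: assumes e: "e \<in> edge_set le F" "e' \<in> edge_set le F" and le: "le (fst e) (fst e')" "le (snd e') (snd e)"
  and ne: "e \<noteq> e'" shows False
proof -
  obtain N t p s where A1: "N \<in> F" "t \<in> {2..k}" "consec P le A t p s" "is_component le (A p) (A s) N"
     "fst e \<in> fst N" "snd e \<in> snd N" "fst e \<in> A p" "snd e \<in> A s" "less_of le (fst e) (snd e)"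
    using edge_node[OF e(1)] by blast
  obtain N' t' p' s' where A2: "N' \<in> F" "t' \<in> {2..k}" "consec P le A t' p' s'" "is_component le (A p') (A s') N'"
     "fst e' \<in> fst N'" "snd e' \<in> snd N'" "fst e' \<in> A p'" "snd e' \<in> A s'" "less_of le (fst e') (snd e')"
    using edge_node[OF e(2)] by blast
  have c: "p \<in> I" "s \<in> I" "sqs p s" "t \<le> k" using consec_I A1 by auto
  have c': "p' \<in> I" "s' \<in> I" "sqs p' s'" "t' \<le> k" using consec_I A2 by auto
  have sp: "sq p p'" using le_sq c c' A1 A2 le by blast
  have ss: "sq s' s" using le_sq c c' A1 A2 le by blast
  have P: "fst e \<in> P" "snd e \<in> P" "fst e' \<in> P" "snd e' \<in> P" using A1 A2 AP c c' by blast+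
  show False
  proof (cases "(p, s) = (p', s')")
    case True
    hence "fst e = fst e'" using Aanti c A1 A2 le by auto
    moreover have "snd e' = snd e" using Aanti c A1 A2 le True by auto
    ultimately show False using ne by (simp add: prod_eq_iff)
  next
    case False
    obtain N'' where N'': "is_component le (A p) (A s) N''" "(node_child P le A k)\<^sup>+\<^sup>+ N' N''"
      using tree[OF A2(3) c'(4) A2(4) A1(3) c(4) sp ss False] by blast
    have sub: "node_int P le N' \<subset> node_int P le N''" using anc_int N''(2) .
    have b1: "snd e' \<in> node_int P le N'" using A2 P refl unfolding node_int_def up_set_def down_set_def less_of_def by blast
    have "le (fst e) (snd e')" using trans[of "fst e" "fst e'" "snd e'"] P le A2(9) unfolding less_of_def by blast
    hence b2: "snd e' \<in> node_int P le N" using A1 P le unfolding node_int_def up_set_def down_set_def by blast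
    have "p \<noteq> s" using c unfolding sqlt_def by auto
    hence "N'' = N" using int_disj[OF c(1,2) _ N''(1) A1(4)] b1 b2 sub by blast
    moreover have "N' \<noteq> N"
    proof
      assume "N' = N"
      hence "fst e' \<in> A p" "snd e' \<in> A s" using A2 comp_sets[OF A1(4)] by auto
      hence "p = p'" "s = s'" using Adisj c c' A2 by blast+
      thus False using False by simp
    qed
    ultimately show False using af A1(1) A2(1) N''(2) unfolding ancestor_free_def by blast
  qed
qed

end

locale RPC = RPF +
  fixes C
  assumes ac: "antichain_on (edge_set le F) (edge_le le) C"
begin

lemma C_sub: "C \<subseteq> edge_set le F" using ac unfolding antichain_on_def by blast

lemma C_anti: "e \<in> C \<Longrightarrow> e' \<in> C \<Longrightarrow> e \<noteq> e' \<Longrightarrow> \<not> le (snd e) (fst e')"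
  using ac unfolding antichain_on_def edge_le_def by blast

lemma C_fin: "finite C"
proof -
  have "C \<subseteq> P \<times> P" using C_sub edge_P by (metis mem_Times_iff subset_iff)
  thus ?thesis using fin finite_subset by blast
qed

end

context RPC
begin

lemma class_bound: "card {e\<in>C. chi (fst e) = x \<and> chi (snd e) = y} \<le> w"
proof -
  define K where "K = {e\<in>C. chi (fst e) = x \<and> chi (snd e) = y}"
  have KC: "K \<subseteq> C" unfolding K_def by blast
  have fK: "finite K" using C_fin KC finite_subset by blast
  show ?thesis
  proof (cases "K = {}")
    case True thus ?thesis by (simp add: K_def[symmetric])
  next
    case False
    obtain e0 where e0: "e0 \<in> K" "\<forall>e\<in>K. r (idx (fst e0)) \<le> r (idx (fst e))"
      using ex_min_nat[OF fK False, of "\<lambda>e. r (idx (fst e))"] by blast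
    have KE: "e \<in> edge_set le F" if "e \<in> K" for e using that KC C_sub by blast
    have KP: "fst e \<in> P" "snd e \<in> P" if "e \<in> K" for e using edge_P KE that by blast+
    have Kchi: "chi (fst e) = x" "chi (snd e) = y" if "e \<in> K" for e using that unfolding K_def by auto
    define v where "v = snd e0"
    have vP: "v \<in> P" using KP e0 unfolding v_def by blast
    have c1: "le (fst e0) (fst e)" if e: "e \<in> K" for e
    proof -
      have "r (idx (fst e0)) \<le> r (idx (fst e))" using e0 e by blast
      hence "sq (idx (fst e0)) (idx (fst e))" using r_sq idx KP e e0 by blast
      thus ?thesis using chi_le KP e e0 Kchi by metis
    qed
    have c2: "le v (snd e)" if e: "e \<in> K" for e
    proof -
      have "le v (snd e) \<or> le (snd e) v" using chi_comp KP e e0 Kchi unfolding v_def by metis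
      moreover have "le v (snd e)" if "le (snd e) v"
      proof (cases "e = e0")
        case True thus ?thesis using refl vP unfolding v_def by simp
      next
        case False
        hence False using NN[OF KE[OF e0(1)] KE[OF e] c1[OF e]] that unfolding v_def by metis
        thus ?thesis ..
      qed
      ultimately show ?thesis by blast
    qed
    have c3: "\<not> le v (fst e)" if e: "e \<in> K" "e \<noteq> e0" for e
      using C_anti e e0 KC unfolding v_def by blast
    define g where "g = (\<lambda>e::'a \<times> 'a. card (U v (idx (snd e))))"
    have c4: "g e < g e'" if e: "e \<in> K" "e' \<in> K" "e \<noteq> e'" "sq (idx (fst e)) (idx (fst e'))" for e e'
    proof -
      obtain N t p s where A1: "N \<in> F" "t \<in> {2..k}" "consec P le A t p s" "is_component le (A p) (A s) N"
         "fst e \<in> fst N" "snd e \<in> snd N" "fst e \<in> A p" "snd e \<in> A s" "less_of le (fst e) (snd e)"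
        using edge_node[OF KE[OF e(1)]] by blast
      obtain N' t' p' s' where A2: "N' \<in> F" "t' \<in> {2..k}" "consec P le A t' p' s'" "is_component le (A p') (A s') N'"
         "fst e' \<in> fst N'" "snd e' \<in> snd N'" "fst e' \<in> A p'" "snd e' \<in> A s'" "less_of le (fst e') (snd e')"
        using edge_node[OF KE[OF e(2)]] by blast
      have c: "p \<in> I" "s \<in> I" "sqs p s" "t \<le> k" "p \<le> t" "s \<le> t" using consec_I A1 by auto
      have c': "p' \<in> I" "s' \<in> I" "sqs p' s'" "t' \<le> k" "p' \<le> t'" "s' \<le> t'" using consec_I A2 by auto
      have ix: "idx (fst e) = p" "idx (snd e) = s" "idx (fst e') = p'" "idx (snd e') = s'"
        using idx_eq c c' A1 A2 by auto
      have P: "fst e \<in> P" "snd e \<in> P" "fst e' \<in> P" "snd e' \<in> P" using KP e by auto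
      have aa: "le (fst e) (fst e')" using chi_le P Kchi e by metis
      have nbb: "\<not> le (snd e') (snd e)" using NN[OF KE[OF e(1)] KE[OF e(2)] aa] e(3) by blast
      have bb: "le (snd e) (snd e')" using chi_comp P Kchi e nbb by metis
      have "snd e \<noteq> snd e'" using nbb refl P by metis
      hence lbb: "less_of le (snd e) (snd e')" using bb unfolding less_of_def by simp
      have "e' \<noteq> e0"
      proof
        assume "e' = e0"
        hence "le (fst e') (fst e)" using c1 e by blast
        hence "fst e = fst e'" using antisym P aa by blast
        have "le (snd e') (snd e)" using c2 e \<open>e' = e0\<close> unfolding v_def by blast
        thus False using nbb by blast
      qed
      hence nva: "\<not> le v (fst e')" using c3 e by blast
      have vb: "le v (snd e')" using c2 e by blast
      have ssp: "sq s p'"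
      proof (rule ccontr)
        assume "\<not> sq s p'"
        hence sp's: "sqs p' s" using not_sq c c' by blast
        have sss': "sqs s s'" using less_sqs[OF c(2) c'(2) A1(8) A2(8) lbb] .
        show False
        proof (cases "t \<le> t'")
          case True
          hence "s \<in> {1..t'}" using c by auto
          thus False using A2(3) sp's sss' unfolding consec_def by blast
        next
          case False
          show False
          proof (cases "p = p'")
            case True
            hence "fst e = fst e'" using Aanti c A1 A2 aa by blast
            hence "le (fst e') (fst e)" using refl P by simp
            thus False using NN[OF KE[OF e(2)] KE[OF e(1)] _ bb] e(3) by metis
          next
            case False
            hence "A p \<noteq> A p'" using Aeq c c' by metis
            moreover have "sq p p'" using e(4) ix by simp
            ultimately have "sqs p p'" unfolding sqlt_def by simp
            moreover have "p' \<in> {1..t}" using c' \<open>\<not> t \<le> t'\<close> by auto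
            ultimately show False using A1(3) sp's unfolding consec_def by blast
          qed
        qed
      qed
      have "g e = card (U v s)" unfolding g_def ix by simp
      also have "\<dots> \<le> card (U v p')" using cnt_mono[OF vP c(2) c'(1) ssp] .
      also have "\<dots> < card (U v s')" using cnt_strict[OF vP A2(2,3,7,8,9) nva vb] .
      also have "\<dots> = g e'" unfolding g_def ix by simp
      finally show ?thesis .
    qed
    have inj: "inj_on g K"
    proof (rule inj_onI)
      fix e e' assume h: "e \<in> K" "e' \<in> K" "g e = g e'"
      show "e = e'"
      proof (rule ccontr)
        assume ne: "e \<noteq> e'"
        have "idx (fst e) \<in> I" "idx (fst e') \<in> I" using idx KP h by blast+
        hence "sq (idx (fst e)) (idx (fst e')) \<or> sq (idx (fst e')) (idx (fst e))" using sq_lin by blast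
        thus False using c4[OF h(1,2) ne] c4[OF h(2,1)] ne h(3) by fastforce
      qed
    qed
    have rng: "g ` K \<subseteq> {1..w}"
    proof
      fix z assume "z \<in> g ` K"
      then obtain e where e: "e \<in> K" "z = g e" by blast
      have i: "idx (snd e) \<in> I" "snd e \<in> A (idx (snd e))" using idx KP e by blast+
      have "snd e \<in> U v (idx (snd e))" using i c2 e unfolding U_def by blast
      hence "1 \<le> g e" unfolding g_def using U_fin[OF i(1)] by (metis One_nat_def Suc_leI card_gt_0_iff empty_iff)
      moreover have "g e \<le> w"
      proof -
        have "U v (idx (snd e)) \<subseteq> A (idx (snd e))" unfolding U_def by blast
        moreover have "finite (A (idx (snd e)))" using fin AP[OF i(1)] finite_subset by blast
        ultimately show ?thesis unfolding g_def using card_mono Acard[OF i(1)] by metis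
      qed
      ultimately show "z \<in> {1..w}" using e by simp
    qed
    have "card K = card (g ` K)" using card_image[OF inj] by simp
    also have "\<dots> \<le> card {1..w}" using card_mono[OF _ rng] by simp
    finally show ?thesis unfolding K_def by simp
  qed
qed

lemma C_bound: "card C \<le> w ^ 3"
proof -
  let ?K = "\<lambda>xy. {e\<in>C. chi (fst e) = fst xy \<and> chi (snd e) = snd xy}"
  have "C \<subseteq> (\<Union>xy\<in>A 1 \<times> A 1. ?K xy)"
  proof
    fix e assume e: "e \<in> C"
    hence "fst e \<in> P" "snd e \<in> P" using C_sub edge_P by blast+
    hence "chi (fst e) \<in> A 1" "chi (snd e) \<in> A 1" using chi by blast+
    thus "e \<in> (\<Union>xy\<in>A 1 \<times> A 1. ?K xy)" using e by force
  qed
  have f1: "finite (A 1)" using fin AP[of 1] k2 finite_subset by auto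
  have fU: "finite (\<Union>xy\<in>A 1 \<times> A 1. ?K xy)" by (rule finite_subset[OF _ C_fin]) auto
  have "card C \<le> card (\<Union>xy\<in>A 1 \<times> A 1. ?K xy)"
    by (rule card_mono[OF fU \<open>C \<subseteq> _\<close>])
  also have "\<dots> \<le> (\<Sum>xy\<in>A 1 \<times> A 1. card (?K xy))" by (rule card_UN_le[OF finite_cartesian_product[OF f1 f1]])
  also have "\<dots> \<le> (\<Sum>xy\<in>A 1 \<times> A 1. w)" using class_bound by (intro sum_mono) auto
  also have "\<dots> = card (A 1) * card (A 1) * w" by (simp add: card_cartesian_product)
  also have "\<dots> = w ^ 3" using Acard[of 1] k2 by (simp add: power3_eq_cube)
  finally show ?thesis .
qed

end

theorem lemma12:
  fixes P :: "'a set" and le :: "'a \<Rightarrow> 'a \<Rightarrow> bool" and A :: "nat \<Rightarrow> 'a set" and k :: nat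
    and F :: "('a set \<times> 'a set) set"
  assumes "regular_poset P le A k"
    and "ancestor_free P le A k F"
  shows "width (edge_set le F) (edge_le le) \<le> (width P le) ^ 3"
proof -
  interpret RPF P le A k F using assms by (unfold_locales)
  let ?S = "{card C | C. antichain_on (edge_set le F) (edge_le le) C}"
  have b: "\<forall>n\<in>?S. n \<le> w ^ 3"
  proof
    fix n assume "n \<in> ?S"
    then obtain C where C: "n = card C" "antichain_on (edge_set le F) (edge_le le) C" by blast
    interpret RPC P le A k F C using C(2) by (unfold_locales)
    show "n \<le> w ^ 3" using C_bound C(1) by simp
  qed
  have "?S \<subseteq> {0..w^3}" using b by auto
  hence fS: "finite ?S" using finite_subset by blast
  have "0 \<in> ?S" unfolding antichain_on_def by force
  hence "?S \<noteq> {}" by blast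
  hence "Max ?S \<le> w ^ 3" using Max.boundedI[OF fS] b by blast
  thus ?thesis unfolding width_def .
qed

end
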